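(* Let $G_l$ be a graph of order $n_l$, maximum degree $\Delta_l$ and minimum degree $\delta_l$, $l\in\{1,2\}$. Then: (i) For $i,j\in\{1,2\}$ with $i\neq j$ and every integer $k\in\{\Delta_j-\Delta_i,\dots,\Delta_i+\Delta_j\}$, $\phi_k^d(G_1\times G_2)\ge n_j\,\phi_{k-\Delta_j}^d(G_i)$. (ii) For all integers $k_1\in\{1-\delta_1,\dots,\Delta_1\}$ and $k_2\in\{1-\delta_2,\dots,\Delta_2\}$, $$\phi_{k_1+k_2-1}^d(G_1\times G_2)\ge \phi_{k_1}^d(G_1)\phi_{k_2}^d(G_2)+\min\{n_1-\phi_{k_1}^d(G_1),\,n_2-\phi_{k_2}^d(G_2)\}.$$
   Context: All graphs are finite and simple. For a graph $G=(V,E)$, a set $S\subseteq V$ and $v\in V$, let $\delta_S(v)=|\{u\in S: uv\in E\}|$, $\delta(v)$ the degree of $v$, and $\overline{S}=V\setminus S$. For an integer $k$, a non-empty set $S\subseteq V$ is a defensive $k$-alliance if $\delta_S(v)\ge \delta_{\overline S}(v)+k$ for every $v\in S$. A set $X\subseteq V$ is a defensive $k$-alliance free set ($k$-daf set) if no defensive $k$-alliance $S$ satisfies $S\subseteq X$. $\phi_k^d(G)$ denotes the maximum cardinality of a $k$-daf set in $G$. The Cartesian product $G_1\times G_2$ of $G_1=(V_1,E_1)$, $G_2=(V_2,E_2)$ has vertex set $V_1\times V_2$, with $(a,b)$ adjacent to $(c,d)$ iff either $a=c$ and $bd\in E_2$, or $b=d$ and $ac\in E_1$. *)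

theory Defs
  imports Main
begin

definition graph :: "'a set \<Rightarrow> ('a \<times> 'a) set \<Rightarrow> bool" where
  "graph V E \<longleftrightarrow> finite V \<and> E \<subseteq> V \<times> V \<and> sym E \<and> irrefl E"

definition delta_in :: "('a \<times> 'a) set \<Rightarrow> 'a set \<Rightarrow> 'a \<Rightarrow> nat" where
  "delta_in E S v = card {u \<in> S. (u, v) \<in> E}"

definition degree :: "'a set \<Rightarrow> ('a \<times> 'a) set \<Rightarrow> 'a \<Rightarrow> nat" where
  "degree V E v = delta_in E V v"

definition max_degree :: "'a set \<Rightarrow> ('a \<times> 'a) set \<Rightarrow> nat" where
  "max_degree V E = Max (degree V E ` V)"

definition min_degree :: "'a set \<Rightarrow> ('a \<times> 'a) set \<Rightarrow> nat" where
  "min_degree V E = Min (degree V E ` V)"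

definition defensive_alliance :: "'a set \<Rightarrow> ('a \<times> 'a) set \<Rightarrow> int \<Rightarrow> 'a set \<Rightarrow> bool" where
  "defensive_alliance V E k S \<longleftrightarrow> S \<noteq> {} \<and> S \<subseteq> V \<and>
     (\<forall>v \<in> S. int (delta_in E S v) \<ge> int (delta_in E (V - S) v) + k)"

definition daf_set :: "'a set \<Rightarrow> ('a \<times> 'a) set \<Rightarrow> int \<Rightarrow> 'a set \<Rightarrow> bool" where
  "daf_set V E k X \<longleftrightarrow> X \<subseteq> V \<and> \<not> (\<exists>S. defensive_alliance V E k S \<and> S \<subseteq> X)"

definition phi_d :: "'a set \<Rightarrow> ('a \<times> 'a) set \<Rightarrow> int \<Rightarrow> nat" where
  "phi_d V E k = Max (card ` {X. daf_set V E k X})"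

definition cart_edges :: "'a set \<Rightarrow> ('a \<times> 'a) set \<Rightarrow> 'b set \<Rightarrow> ('b \<times> 'b) set
    \<Rightarrow> (('a \<times> 'b) \<times> ('a \<times> 'b)) set" where
  "cart_edges V1 E1 V2 E2 = {((a, b), (c, d)).
      (a = c \<and> a \<in> V1 \<and> (b, d) \<in> E2) \<or> (b = d \<and> b \<in> V2 \<and> (a, c) \<in> E1)}"

end

theory Submission imports Defs begin
lemma decomp:
  assumes g1: "graph V1 E1" and g2: "graph V2 E2" and a: "a \<in> V1" and b: "b \<in> V2"
    and S: "S \<subseteq> V1 \<times> V2"
  shows "delta_in (cart_edges V1 E1 V2 E2) S (a,b)
       = delta_in E1 {c. (c,b) \<in> S} a + delta_in E2 {d. (a,d) \<in> S} b"
proof -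
  let ?A = "{c\<in>{c. (c,b)\<in>S}. (c,a)\<in>E1}" and ?B = "{d\<in>{d. (a,d)\<in>S}. (d,b)\<in>E2}"
  have eq: "{u\<in>S. (u,(a,b)) \<in> cart_edges V1 E1 V2 E2} = (\<lambda>c. (c,b)) ` ?A \<union> (\<lambda>d. (a,d)) ` ?B"
    using a b S by (auto simp: cart_edges_def)
  have irr: "(a,a) \<notin> E1" using g1 by (auto simp: graph_def irrefl_def)
  have disj: "(\<lambda>c. (c,b)) ` ?A \<inter> (\<lambda>d. (a,d)) ` ?B = {}" using irr by auto
  have sA: "?A \<subseteq> V1" using S by auto
  have sB: "?B \<subseteq> V2" using S by auto
  have fA: "finite ?A" using sA g1 unfolding graph_def using finite_subset by blast
  have fB: "finite ?B" using sB g2 unfolding graph_def using finite_subset by blast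
  have "card ((\<lambda>c. (c,b)) ` ?A \<union> (\<lambda>d. (a,d)) ` ?B) = card ((\<lambda>c. (c,b)) ` ?A) + card ((\<lambda>d. (a,d)) ` ?B)"
    using fA fB disj by (intro card_Un_disjoint) auto
  also have "\<dots> = card ?A + card ?B"
    by (subst card_image, simp add: inj_on_def)+ simp
  finally show ?thesis unfolding delta_in_def eq by simp
qed
lemma delta_le:
  assumes "graph V E" "T \<subseteq> P" "P \<subseteq> V"
  shows "delta_in E T a \<le> delta_in E P a"
proof -
  have fV: "finite V" using assms(1) by (simp add: graph_def)
  have s: "{u\<in>P. (u,a)\<in>E} \<subseteq> V" using assms(3) by blast
  have f: "finite {u\<in>P. (u,a)\<in>E}" using finite_subset[OF s fV] .
  show ?thesis unfolding delta_in_def using assms(2) by (intro card_mono[OF f]) blast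
qed

lemma mono_diff:
  assumes g: "graph V E" and "T \<subseteq> P" "P \<subseteq> V"
  shows "int (delta_in E T a) - int (delta_in E (V - T) a) \<le> int (delta_in E P a) - int (delta_in E (V - P) a)"
proof -
  have "delta_in E T a \<le> delta_in E P a" using assms delta_le by metis
  moreover have "delta_in E (V-P) a \<le> delta_in E (V-T) a" using assms by (intro delta_le[OF g]) auto
  ultimately show ?thesis by linarith
qed

lemma le_maxdeg:
  assumes g: "graph V E" and "T \<subseteq> V" "a \<in> V"
  shows "delta_in E T a \<le> max_degree V E"
proof -
  have "delta_in E T a \<le> degree V E a" unfolding degree_def using assms by (intro delta_le[OF g]) auto
  also have "\<dots> \<le> max_degree V E" unfolding max_degree_def using assms by (intro Max_ge) (auto simp: graph_def)
  finally show ?thesis .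
qed

lemma mindeg_le:
  assumes g: "graph V E" and "a \<in> V"
  shows "min_degree V E \<le> degree V E a"
  unfolding min_degree_def using assms by (intro Min_le) (auto simp: graph_def)

lemma single_deltas:
  assumes g: "graph V E" and "T \<subseteq> {a}"
  shows "delta_in E T a = 0" "delta_in E (V - T) a = degree V E a"
proof -
  have irr: "(a,a) \<notin> E" using g by (auto simp: graph_def irrefl_def)
  have "{u\<in>T. (u,a)\<in>E} = {}" using assms irr by auto
  then show "delta_in E T a = 0" unfolding delta_in_def by (subst \<open>{u\<in>T. (u,a)\<in>E} = {}\<close>) simp
  have "{u\<in>V-T. (u,a)\<in>E} = {u\<in>V. (u,a)\<in>E}" using assms irr by auto
  then show "delta_in E (V - T) a = degree V E a" unfolding delta_in_def degree_def by (rule arg_cong)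
qed

lemma nonalliance:
  assumes "daf_set V E k X" "P \<subseteq> X" "P \<noteq> {}"
  shows "\<exists>a\<in>P. int (delta_in E P a) < int (delta_in E (V - P) a) + k"
proof -
  have PV: "P \<subseteq> V" using assms(1,2) unfolding daf_set_def by blast
  have "\<not> defensive_alliance V E k P" using assms(1,2) unfolding daf_set_def by blast
  then have "\<not> (\<forall>v \<in> P. int (delta_in E P v) \<ge> int (delta_in E (V - P) v) + k)"
    using PV assms(3) unfolding defensive_alliance_def by blast
  then show ?thesis by (simp add: not_le)
qed

lemma phi_exists:
  assumes "graph V E"
  shows "\<exists>X. daf_set V E k X \<and> card X = phi_d V E k"
proof -
  have fV: "finite V" using assms(1) by (simp add: graph_def)
  have sP: "{X. daf_set V E k X} \<subseteq> Pow V" by (auto simp: daf_set_def)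
  have fin: "finite {X. daf_set V E k X}" using finite_subset[OF sP] fV by simp
  have ne: "{} \<in> {X. daf_set V E k X}" by (auto simp: daf_set_def defensive_alliance_def)
  have "phi_d V E k \<in> card ` {X. daf_set V E k X}" unfolding phi_d_def
    using fin ne by (intro Max_in) auto
  then show ?thesis by auto
qed

lemma phi_ge:
  assumes "graph V E" "daf_set V E k Y"
  shows "card Y \<le> phi_d V E k"
proof -
  have fV: "finite V" using assms(1) by (simp add: graph_def)
  have sP: "{X. daf_set V E k X} \<subseteq> Pow V" by (auto simp: daf_set_def)
  have fin: "finite {X. daf_set V E k X}" using finite_subset[OF sP] fV by simp
  show ?thesis unfolding phi_d_def using fin assms by (intro Max_ge) auto
qed

lemma prod_graph:
  assumes "graph V1 E1" "graph V2 E2"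
  shows "graph (V1 \<times> V2) (cart_edges V1 E1 V2 E2)"
  using assms unfolding graph_def cart_edges_def sym_def irrefl_def by auto

lemma alliance_ineq:
  assumes g1: "graph V1 E1" and g2: "graph V2 E2"
    and al: "defensive_alliance (V1 \<times> V2) (cart_edges V1 E1 V2 E2) k S" and v: "(a,b) \<in> S"
  shows "(int (delta_in E1 {c. (c,b)\<in>S} a) - int (delta_in E1 (V1 - {c. (c,b)\<in>S}) a))
       + (int (delta_in E2 {d. (a,d)\<in>S} b) - int (delta_in E2 (V2 - {d. (a,d)\<in>S}) b)) \<ge> k"
proof -
  have S: "S \<subseteq> V1 \<times> V2" using al by (simp add: defensive_alliance_def)
  have a: "a \<in> V1" and b: "b \<in> V2" using S v by auto
  have i: "int (delta_in (cart_edges V1 E1 V2 E2) S (a,b)) \<ge> int (delta_in (cart_edges V1 E1 V2 E2) (V1 \<times> V2 - S) (a,b)) + k"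
    using al v unfolding defensive_alliance_def by blast
  have e1: "{c. (c,b) \<in> V1 \<times> V2 - S} = V1 - {c. (c,b)\<in>S}" using b by auto
  have e2: "{d. (a,d) \<in> V1 \<times> V2 - S} = V2 - {d. (a,d)\<in>S}" using a by auto
  show ?thesis using i decomp[OF g1 g2 a b S] decomp[OF g1 g2 a b, of "V1 \<times> V2 - S"] e1 e2 by simp
qed
theorem corollary1:
  fixes V1 :: "'a set" and E1 :: "('a \<times> 'a) set"
    and V2 :: "'b set" and E2 :: "('b \<times> 'b) set"
  assumes "graph V1 E1" and "graph V2 E2" and "V1 \<noteq> {}" and "V2 \<noteq> {}"
  shows
    "(\<forall>k::int. int (max_degree V2 E2) - int (max_degree V1 E1) \<le> k
         \<and> k \<le> int (max_degree V1 E1) + int (max_degree V2 E2) \<longrightarrow>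
       phi_d (V1 \<times> V2) (cart_edges V1 E1 V2 E2) k
         \<ge> card V2 * phi_d V1 E1 (k - int (max_degree V2 E2)))
   \<and> (\<forall>k::int. int (max_degree V1 E1) - int (max_degree V2 E2) \<le> k
         \<and> k \<le> int (max_degree V2 E2) + int (max_degree V1 E1) \<longrightarrow>
       phi_d (V1 \<times> V2) (cart_edges V1 E1 V2 E2) k
         \<ge> card V1 * phi_d V2 E2 (k - int (max_degree V1 E1)))
   \<and> (\<forall>k1 k2::int. 1 - int (min_degree V1 E1) \<le> k1 \<and> k1 \<le> int (max_degree V1 E1)
         \<and> 1 - int (min_degree V2 E2) \<le> k2 \<and> k2 \<le> int (max_degree V2 E2) \<longrightarrow>
       phi_d (V1 \<times> V2) (cart_edges V1 E1 V2 E2) (k1 + k2 - 1)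
         \<ge> phi_d V1 E1 k1 * phi_d V2 E2 k2
            + min (card V1 - phi_d V1 E1 k1) (card V2 - phi_d V2 E2 k2))"
proof -
  note g1 = assms(1) and g2 = assms(2)
  have gp: "graph (V1 \<times> V2) (cart_edges V1 E1 V2 E2)" using prod_graph[OF g1 g2] .
  have fV1: "finite V1" and fV2: "finite V2" using g1 g2 by (auto simp: graph_def)
  have P1: "\<forall>k::int. int (max_degree V2 E2) - int (max_degree V1 E1) \<le> k
         \<and> k \<le> int (max_degree V1 E1) + int (max_degree V2 E2) \<longrightarrow>
       phi_d (V1 \<times> V2) (cart_edges V1 E1 V2 E2) k
         \<ge> card V2 * phi_d V1 E1 (k - int (max_degree V2 E2))"
  proof (intro allI impI)
    fix k :: int
    let ?D = "int (max_degree V2 E2)"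
    obtain X where X: "daf_set V1 E1 (k - ?D) X" "card X = phi_d V1 E1 (k - ?D)"
      using phi_exists[OF g1] by blast
    have XV: "X \<subseteq> V1" using X by (simp add: daf_set_def)
    have daf: "daf_set (V1 \<times> V2) (cart_edges V1 E1 V2 E2) k (X \<times> V2)"
      unfolding daf_set_def
    proof (intro conjI notI)
      show "X \<times> V2 \<subseteq> V1 \<times> V2" using XV by auto
      assume "\<exists>S. defensive_alliance (V1 \<times> V2) (cart_edges V1 E1 V2 E2) k S \<and> S \<subseteq> X \<times> V2"
      then obtain S where al: "defensive_alliance (V1 \<times> V2) (cart_edges V1 E1 V2 E2) k S"
        and sub: "S \<subseteq> X \<times> V2" by blast
      have ne: "fst ` S \<noteq> {}" using al by (auto simp: defensive_alliance_def)
      have fsub: "fst ` S \<subseteq> X" using sub by auto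
      obtain a where a: "a \<in> fst ` S"
        and lt: "int (delta_in E1 (fst ` S) a) < int (delta_in E1 (V1 - fst ` S) a) + (k - ?D)"
        using nonalliance[OF X(1) fsub ne] by blast
      then obtain d where ad: "(a,d) \<in> S" by force
      note ineq = alliance_ineq[OF g1 g2 al ad]
      have m: "int (delta_in E1 {c. (c,d)\<in>S} a) - int (delta_in E1 (V1 - {c. (c,d)\<in>S}) a)
          \<le> int (delta_in E1 (fst ` S) a) - int (delta_in E1 (V1 - fst ` S) a)"
        using fsub XV by (intro mono_diff[OF g1]) force+
      have "delta_in E2 {d'. (a,d')\<in>S} d \<le> max_degree V2 E2"
        using sub ad by (intro le_maxdeg[OF g2]) auto
      then show False using ineq m lt by linarith
    qed
    have "card (X \<times> V2) \<le> phi_d (V1 \<times> V2) (cart_edges V1 E1 V2 E2) k" using phi_ge[OF gp daf] .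
    then show "phi_d (V1 \<times> V2) (cart_edges V1 E1 V2 E2) k \<ge> card V2 * phi_d V1 E1 (k - ?D)"
      using X(2) by (simp add: card_cartesian_product mult.commute)
  qed
  have P2: "\<forall>k::int. int (max_degree V1 E1) - int (max_degree V2 E2) \<le> k
         \<and> k \<le> int (max_degree V2 E2) + int (max_degree V1 E1) \<longrightarrow>
       phi_d (V1 \<times> V2) (cart_edges V1 E1 V2 E2) k
         \<ge> card V1 * phi_d V2 E2 (k - int (max_degree V1 E1))"
  proof (intro allI impI)
    fix k :: int
    let ?D = "int (max_degree V1 E1)"
    obtain X where X: "daf_set V2 E2 (k - ?D) X" "card X = phi_d V2 E2 (k - ?D)"
      using phi_exists[OF g2] by blast
    have XV: "X \<subseteq> V2" using X by (simp add: daf_set_def)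
    have daf: "daf_set (V1 \<times> V2) (cart_edges V1 E1 V2 E2) k (V1 \<times> X)"
      unfolding daf_set_def
    proof (intro conjI notI)
      show "V1 \<times> X \<subseteq> V1 \<times> V2" using XV by auto
      assume "\<exists>S. defensive_alliance (V1 \<times> V2) (cart_edges V1 E1 V2 E2) k S \<and> S \<subseteq> V1 \<times> X"
      then obtain S where al: "defensive_alliance (V1 \<times> V2) (cart_edges V1 E1 V2 E2) k S"
        and sub: "S \<subseteq> V1 \<times> X" by blast
      have ne: "snd ` S \<noteq> {}" using al by (auto simp: defensive_alliance_def)
      have fsub: "snd ` S \<subseteq> X" using sub by auto
      obtain d where d: "d \<in> snd ` S"
        and lt: "int (delta_in E2 (snd ` S) d) < int (delta_in E2 (V2 - snd ` S) d) + (k - ?D)"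
        using nonalliance[OF X(1) fsub ne] by blast
      then obtain a where ad: "(a,d) \<in> S" by force
      note ineq = alliance_ineq[OF g1 g2 al ad]
      have m: "int (delta_in E2 {d'. (a,d')\<in>S} d) - int (delta_in E2 (V2 - {d'. (a,d')\<in>S}) d)
          \<le> int (delta_in E2 (snd ` S) d) - int (delta_in E2 (V2 - snd ` S) d)"
        using fsub XV by (intro mono_diff[OF g2]) force+
      have "delta_in E1 {c. (c,d)\<in>S} a \<le> max_degree V1 E1"
        using sub ad by (intro le_maxdeg[OF g1]) auto
      then show False using ineq m lt by linarith
    qed
    have "card (V1 \<times> X) \<le> phi_d (V1 \<times> V2) (cart_edges V1 E1 V2 E2) k" using phi_ge[OF gp daf] .
    then show "phi_d (V1 \<times> V2) (cart_edges V1 E1 V2 E2) k \<ge> card V1 * phi_d V2 E2 (k - ?D)"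
      using X(2) by (simp add: card_cartesian_product)
  qed
  have P3: "\<forall>k1 k2::int. 1 - int (min_degree V1 E1) \<le> k1 \<and> k1 \<le> int (max_degree V1 E1)
         \<and> 1 - int (min_degree V2 E2) \<le> k2 \<and> k2 \<le> int (max_degree V2 E2) \<longrightarrow>
       phi_d (V1 \<times> V2) (cart_edges V1 E1 V2 E2) (k1 + k2 - 1)
         \<ge> phi_d V1 E1 k1 * phi_d V2 E2 k2
            + min (card V1 - phi_d V1 E1 k1) (card V2 - phi_d V2 E2 k2)"
  proof (intro allI impI)
    fix k1 k2 :: int
    assume rng: "1 - int (min_degree V1 E1) \<le> k1 \<and> k1 \<le> int (max_degree V1 E1)
         \<and> 1 - int (min_degree V2 E2) \<le> k2 \<and> k2 \<le> int (max_degree V2 E2)"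
    obtain X1 where X1: "daf_set V1 E1 k1 X1" "card X1 = phi_d V1 E1 k1"
      using phi_exists[OF g1] by blast
    obtain X2 where X2: "daf_set V2 E2 k2 X2" "card X2 = phi_d V2 E2 k2"
      using phi_exists[OF g2] by blast
    have X1V: "X1 \<subseteq> V1" using X1 by (simp add: daf_set_def)
    have X2V: "X2 \<subseteq> V2" using X2 by (simp add: daf_set_def)
    define m where "m = min (card V1 - phi_d V1 E1 k1) (card V2 - phi_d V2 E2 k2)"
    have fX1: "finite X1" using X1V fV1 by (rule finite_subset)
    have fX2: "finite X2" using X2V fV2 by (rule finite_subset)
    have c1: "card (V1 - X1) = card V1 - phi_d V1 E1 k1"
      using card_Diff_subset[OF fX1 X1V] X1(2) by simp
    have c2: "card (V2 - X2) = card V2 - phi_d V2 E2 k2"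
      using card_Diff_subset[OF fX2 X2V] X2(2) by simp
    have m1: "m \<le> card (V1 - X1)" using c1 unfolding m_def by simp
    have m2: "m \<le> card (V2 - X2)" using c2 unfolding m_def by simp
    obtain A where A: "A \<subseteq> V1 - X1" "card A = m" "finite A"
      using m1 by (rule obtain_subset_with_card_n)
    obtain B where B: "B \<subseteq> V2 - X2" "card B = m" "finite B"
      using m2 by (rule obtain_subset_with_card_n)
    have cAB: "card A = card B" using A(2) B(2) by simp
    obtain h where h: "bij_betw h A B" using finite_same_card_bij[OF A(3) B(3) cAB] by blast
    have hinj: "inj_on h A" using h by (rule bij_betw_imp_inj_on)
    have hB: "\<And>a. a \<in> A \<Longrightarrow> h a \<in> B" using h by (auto simp: bij_betw_def)
    define D where "D = (\<lambda>a. (a, h a)) ` A"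
    define Y where "Y = X1 \<times> X2 \<union> D"
    have daf: "daf_set (V1 \<times> V2) (cart_edges V1 E1 V2 E2) (k1 + k2 - 1) Y"
      unfolding daf_set_def
    proof (intro conjI notI)
      show "Y \<subseteq> V1 \<times> V2" using X1V X2V A(1) B(1) hB unfolding Y_def D_def by blast
      assume "\<exists>S. defensive_alliance (V1 \<times> V2) (cart_edges V1 E1 V2 E2) (k1 + k2 - 1) S \<and> S \<subseteq> Y"
      then obtain S where al: "defensive_alliance (V1 \<times> V2) (cart_edges V1 E1 V2 E2) (k1 + k2 - 1) S"
        and sub: "S \<subseteq> Y" by blast
      show False
      proof (cases "S \<inter> D = {}")
        case False
        then obtain a where aA: "a \<in> A" and aS: "(a, h a) \<in> S" unfolding D_def by auto
        have aV: "a \<in> V1" and haV: "h a \<in> V2" using aA A B hB[OF aA] by auto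
        have rs: "{c. (c, h a) \<in> S} \<subseteq> {a}"
        proof
          fix c assume "c \<in> {c. (c, h a) \<in> S}"
          then have "(c, h a) \<in> Y" using sub by auto
          moreover have "h a \<notin> X2" using hB[OF aA] B by auto
          ultimately have "(c, h a) \<in> D" unfolding Y_def by blast
          then obtain a' where a': "a' \<in> A" "(c, h a) = (a', h a')" unfolding D_def by blast
          then have "c = a'" "h a = h a'" by simp_all
          then have "c = a" using inj_onD[OF hinj _ aA a'(1)] by simp
          then show "c \<in> {a}" by simp
        qed
        have cs: "{d. (a, d) \<in> S} \<subseteq> {h a}"
        proof
          fix d assume "d \<in> {d. (a, d) \<in> S}"
          then have "(a, d) \<in> Y" using sub by auto
          moreover have "a \<notin> X1" using aA A by auto
          ultimately have "(a, d) \<in> D" unfolding Y_def by blast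
          then obtain a' where a': "a' \<in> A" "(a, d) = (a', h a')" unfolding D_def by blast
          then show "d \<in> {h a}" by simp
        qed
        note ineq = alliance_ineq[OF g1 g2 al aS]
        note s1 = single_deltas[OF g1 rs] and s2 = single_deltas[OF g2 cs]
        have "min_degree V1 E1 \<le> degree V1 E1 a" using mindeg_le[OF g1 aV] .
        moreover have "min_degree V2 E2 \<le> degree V2 E2 (h a)" using mindeg_le[OF g2 haV] .
        ultimately show False using ineq s1 s2 rng by linarith
      next
        case True
        then have sub2: "S \<subseteq> X1 \<times> X2" using sub unfolding Y_def by auto
        have ne: "fst ` S \<noteq> {}" using al by (auto simp: defensive_alliance_def)
        have fsub: "fst ` S \<subseteq> X1" using sub2 by auto
        obtain a where a: "a \<in> fst ` S"
          and lt: "int (delta_in E1 (fst ` S) a) < int (delta_in E1 (V1 - fst ` S) a) + k1"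
          using nonalliance[OF X1(1) fsub ne] by blast
        let ?T = "{d. (a, d) \<in> S}"
        have Tne: "?T \<noteq> {}" using a by force
        have TX: "?T \<subseteq> X2" using sub2 by auto
        have "defensive_alliance V2 E2 k2 ?T"
          unfolding defensive_alliance_def
        proof (intro conjI ballI)
          show "?T \<noteq> {}" by (rule Tne)
          show "?T \<subseteq> V2" using TX X2V by auto
          fix d assume "d \<in> ?T"
          then have ad: "(a, d) \<in> S" by simp
          note ineq = alliance_ineq[OF g1 g2 al ad]
          have m: "int (delta_in E1 {c. (c,d)\<in>S} a) - int (delta_in E1 (V1 - {c. (c,d)\<in>S}) a)
              \<le> int (delta_in E1 (fst ` S) a) - int (delta_in E1 (V1 - fst ` S) a)"
            using fsub X1V by (intro mono_diff[OF g1]) force+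
          show "int (delta_in E2 ?T d) \<ge> int (delta_in E2 (V2 - ?T) d) + k2"
            using ineq m lt by linarith
        qed
        then show False using X2(1) TX unfolding daf_set_def by blast
      qed
    qed
    have fX: "finite (X1 \<times> X2)" using fX1 fX2 by simp
    have fD: "finite D" unfolding D_def using A(3) by simp
    have dj: "X1 \<times> X2 \<inter> D = {}" unfolding D_def using A(1) by blast
    have cD: "card D = m" unfolding D_def using A(2) by (subst card_image) (auto simp: inj_on_def)
    have "card Y = card (X1 \<times> X2) + card D"
      unfolding Y_def by (rule card_Un_disjoint[OF fX fD dj])
    also have "card (X1 \<times> X2) = phi_d V1 E1 k1 * phi_d V2 E2 k2"
      unfolding card_cartesian_product X1(2) X2(2) by (rule refl)
    finally have cY: "card Y = phi_d V1 E1 k1 * phi_d V2 E2 k2 + m" using cD by simp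
    then show "phi_d (V1 \<times> V2) (cart_edges V1 E1 V2 E2) (k1 + k2 - 1)
         \<ge> phi_d V1 E1 k1 * phi_d V2 E2 k2
            + min (card V1 - phi_d V1 E1 k1) (card V2 - phi_d V2 E2 k2)"
      using phi_ge[OF gp daf] cY unfolding m_def by linarith
  qed
  show ?thesis using P1 P2 P3 by blast
qed

end
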